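(* For the ternary soft heap with error parameter $0<\epsilon<1$, any sequence of operations consisting of $N$ insertions and $\delta$ extract-min operations takes total time $O(N+\delta\lg\frac1\epsilon)$ (for $\epsilon\le 1/2$); that is, \textsf{insert} takes amortized $O(1)$ time and \textsf{extract-min} amortized $O(\lg\frac1\epsilon)$ time.
   Context: Ternary soft heap with error parameter $0<\epsilon<1$ and threshold $r_0=\max(2,\lceil\lg(1/\epsilon)\rceil)$ ($\lg$ = binary logarithm). Items are (key, value) pairs with distinct keys from a totally ordered universe. A rank-$r$ tree is a perfectly balanced rooted tree in which every internal node has exactly $3$ children and all $3^r$ leaves are at depth $r$; a node whose subtree has height $r$ has rank $r$. Each leaf corresponds to a distinct insertion. Each node holds at most one item (it may be empty); the tree is heap-ordered (an item's key is at most the keys of items at descendants). Each item $e$ held at a node carries a corruption-set $C(e)$ (empty when inserted), stored as a cyclic linked list allowing constant-time concatenation. The heap is a list of trees in nondecreasing rank order, with at most $2$ trees of each rank, together with, for each root, a suffix-min reference to the root with minimum item among it and all later roots. \textsf{insert}$(e)$: add a rank-$0$ tree holding $e$ at the front; while the first three trees have equal rank $r$, link them: create a new node of rank $r+1$ with the three roots as children and fill it; then update the suffix-min reference of the first tree. Filling an empty node $v$ of rank $r$: a single pull moves to $v$ the minimum-key item among $v$'s children and then recursively fills the child it came from (a node whose subtree holds no items stays empty). If $r\le r_0$, $v$ is filled by one pull; if $r>r_0$, two items $e_1,e_2$ with $\mathrm{key}(e_1)\le\mathrm{key}(e_2)$ are pulled up successively, $e_1$ and all of $C(e_1)$ are added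 to $C(e_2)$ ($e_1$ becomes corrupted), and $e_2$ is stored at $v$ (if only one item is available, it is stored). \textsf{extract-min}: let $e$ be the minimum-key item among roots (found via the first suffix-min reference); if $C(e)\neq\emptyset$, remove and return an item of $C(e)$ with current key $\mathrm{key}(e)$; otherwise remove $e$, refill its root, update the suffix-min references from that root back to the front of the list, and return $e$ with the corruptions created. *)

theory Defs
  imports Complex_Main
begin

text \<open>A cell is the content of a node: the item held there together with its
corruption-set (a list, concatenation being O(1) as for cyclic lists).\<close>

type_synonym ('k,'v) item = "'k \<times> 'v"
type_synonym ('k,'v) cell = "('k,'v) item \<times> ('k,'v) item list"

text \<open>A node: its rank, its (optional) cell, and its children (3 for internal
nodes, none for leaves).\<close>
datatype ('k,'v) tree =
  Nd (rank: nat) (cell: "('k,'v) cell option") (kids: "('k,'v) tree list")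

definition ckey :: "('k,'v) cell \<Rightarrow> 'k" where
  "ckey c = fst (fst c)"

text \<open>Returns the pulled cell (if any), the
new children and the cost (number of elementary steps).\<close>
definition pull ::
  "(('k::linorder,'v) tree \<Rightarrow> ('k,'v) tree \<times> nat) \<Rightarrow> ('k,'v) tree list
     \<Rightarrow> ('k,'v) cell option \<times> ('k,'v) tree list \<times> nat" where
  "pull fl cs =
    (let I = {i. i < length cs \<and> cell (cs!i) \<noteq> None} in
     if I = {} then (None, cs, 1)
     else
       (let i = arg_min (\<lambda>i. ckey (the (cell (cs!i)))) (\<lambda>i. i \<in> I);
            ch = cs!i;
            (ch', k) = fl (Nd (rank ch) None (kids ch))
        in (cell ch, cs[i := ch'], 1 + k)))"

fun corrupt :: "('k,'v) cell option \<Rightarrow> ('k,'v) cell option \<Rightarrow> ('k,'v) cell option" where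
  "corrupt (Some (e1, C1)) (Some (e2, C2)) = Some (e2, C2 @ (e1 # C1))"
| "corrupt x None = x"
| "corrupt None y = y"

definition fill_step ::
  "nat \<Rightarrow> (('k::linorder,'v) tree \<Rightarrow> ('k,'v) tree \<times> nat) \<Rightarrow> ('k,'v) tree
     \<Rightarrow> ('k,'v) tree \<times> nat" where
  "fill_step r0 fl t =
    (let r = rank t; cs = kids t in
     if r \<le> r0 then
       (let (x, cs1, k1) = pull fl cs in (Nd r x cs1, 1 + k1))
     else
       (let (x1, cs1, k1) = pull fl cs;
            (x2, cs2, k2) = pull fl cs1
        in (Nd r (corrupt x1 x2) cs2, 1 + k1 + k2)))"

text \<open>Fill with explicit fuel (the recursion depth is bounded by the rank).\<close>
primrec fillf :: "nat \<Rightarrow> nat \<Rightarrow> ('k::linorder,'v) tree \<Rightarrow> ('k,'v) tree \<times> nat" where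
  "fillf 0 r0 t = (t, 1)"
| "fillf (Suc f) r0 t = fill_step r0 (fillf f r0) t"

definition fill :: "nat \<Rightarrow> ('k::linorder,'v) tree \<Rightarrow> ('k,'v) tree \<times> nat" where
  "fill r0 t = fillf (Suc (rank t)) r0 t"

function (sequential) link_loop ::
  "nat \<Rightarrow> ('k::linorder,'v) tree list \<Rightarrow> ('k,'v) tree list \<times> nat" where
  "link_loop r0 (t1 # t2 # t3 # ts) =
    (if rank t1 = rank t2 \<and> rank t2 = rank t3 then
       (let (v, k) = fill r0 (Nd (Suc (rank t1)) None [t1, t2, t3]);
            (ts', k') = link_loop r0 (v # ts)
        in (ts', 1 + k + k'))
     else (t1 # t2 # t3 # ts, 1))"
| "link_loop r0 ts = (ts, 1)"
  by pat_completeness auto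
termination by (relation "measure (\<lambda>(r0, ts). length ts)") auto

text \<open>insert: create the rank-0 tree (cost 1), run the linking loop, update the
suffix-min reference of the first tree (cost 1).\<close>
definition ins :: "nat \<Rightarrow> ('k::linorder,'v) item \<Rightarrow> ('k,'v) tree list
     \<Rightarrow> ('k,'v) tree list \<times> nat" where
  "ins r0 e ts = (let (ts', k) = link_loop r0 (Nd 0 (Some (e, [])) [] # ts) in (ts', k + 2))"

definition root_idx :: "('k,'v) tree list \<Rightarrow> nat set" where
  "root_idx ts = {i. i < length ts \<and> cell (ts!i) \<noteq> None}"

definition min_root :: "('k::linorder,'v) tree list \<Rightarrow> nat" where
  "min_root ts = arg_min (\<lambda>i. ckey (the (cell (ts!i)))) (\<lambda>i. i \<in> root_idx ts)"

text \<open>extract-min (as a relation: when C(e) is nonempty, any of its items may be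
removed).  The last component is the cost.  In the third case the cost counts the
refill and the update of the suffix-min references of roots 0..j.\<close>
inductive ext_step :: "nat \<Rightarrow> ('k::linorder,'v) tree list \<Rightarrow> ('k,'v) tree list \<Rightarrow> nat \<Rightarrow> bool"
  for r0 where
  ext_empty: "root_idx ts = {} \<Longrightarrow> ext_step r0 ts ts 1"
| ext_corr: "root_idx ts \<noteq> {} \<Longrightarrow> j = min_root ts \<Longrightarrow> cell (ts!j) = Some (e, C) \<Longrightarrow>
     x \<in> set C \<Longrightarrow>
     ext_step r0 ts (ts[j := Nd (rank (ts!j)) (Some (e, remove1 x C)) (kids (ts!j))]) 1"
| ext_own: "root_idx ts \<noteq> {} \<Longrightarrow> j = min_root ts \<Longrightarrow> cell (ts!j) = Some (e, []) \<Longrightarrow>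
     fill r0 (Nd (rank (ts!j)) None (kids (ts!j))) = (t', k) \<Longrightarrow>
     ext_step r0 ts (ts[j := t']) (1 + k + (j + 1))"

datatype ('k,'v) hop = Insert "('k,'v) item" | ExtractMin

inductive exec :: "nat \<Rightarrow> ('k::linorder,'v) tree list \<Rightarrow> ('k,'v) hop list \<Rightarrow> nat \<Rightarrow> bool"
  for r0 where
  exec_nil: "exec r0 ts [] 0"
| exec_ins: "ins r0 e ts = (ts', k) \<Longrightarrow> exec r0 ts' ops c \<Longrightarrow> exec r0 ts (Insert e # ops) (k + c)"
| exec_ext: "ext_step r0 ts ts' k \<Longrightarrow> exec r0 ts' ops c \<Longrightarrow> exec r0 ts (ExtractMin # ops) (k + c)"

definition inserted :: "('k,'v) hop list \<Rightarrow> ('k,'v) item list" where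
  "inserted ops = [e. Insert e \<leftarrow> ops]"

definition n_ext :: "('k,'v) hop list \<Rightarrow> nat" where
  "n_ext ops = length (filter (\<lambda>h. h = ExtractMin) ops)"

definition thr :: "real \<Rightarrow> nat" where
  "thr \<epsilon> = max 2 (nat \<lceil>log 2 (1 / \<epsilon>)\<rceil>)"

end

theory Submission
  imports Defs
begin


fun itc :: "('k,'v) cell option \<Rightarrow> nat" where
  "itc None = 0"
| "itc (Some (e, C)) = Suc (length C)"

fun good :: "nat \<Rightarrow> ('k,'v) tree \<Rightarrow> bool" where
  "good r0 (Nd r c ks) = (itc c \<le> 2^(r - r0) \<and>
     (if r = 0 then ks = [] else length ks = 3 \<and> (\<forall>k\<in>set ks. rank k = r - 1 \<and> good r0 k)))"

definition kap :: "nat \<Rightarrow> real" where "kap r0 = 4 * real r0 + 5"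

definition nonemp :: "('k,'v) tree list \<Rightarrow> bool" where
  "nonemp ks = (\<exists>k\<in>set ks. cell k \<noteq> None)"

definition phi :: "nat \<Rightarrow> nat \<Rightarrow> ('k,'v) cell option \<Rightarrow> ('k,'v) tree list \<Rightarrow> real" where
  "phi r0 r c ks = kap r0 * 2^(r - r0) - kap r0 * real (itc c)
     + (if c = None then 0 else 2 * real r + 5) + (if nonemp ks then 5 else 0)"

fun pot :: "nat \<Rightarrow> ('k,'v) tree \<Rightarrow> real" where
  "pot r0 (Nd r c ks) = (if r0 < r then phi r0 r c ks + sum_list (map (pot r0) ks) else 0)"

definition AA :: "nat \<Rightarrow> nat \<Rightarrow> ('k,'v) tree list \<Rightarrow> real" where
  "AA r0 s ks = (if s \<le> r0 then 2 * real s + 2 else kap r0 * 2^(s - r0) + 3 + (if nonemp ks then 5 else 0))"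

definition gg :: "nat \<Rightarrow> nat \<Rightarrow> ('k,'v) cell \<Rightarrow> real" where
  "gg r0 s a = (if r0 < s then 2 * real s + 2 - kap r0 * real (itc (Some a)) else - (2 * real s + 2))"

lemma pot_low: "rank t \<le> r0 \<Longrightarrow> pot r0 t = 0"
  by (cases t) auto

lemma good_empty: "good r0 t \<Longrightarrow> good r0 (Nd (rank t) None (kids t))"
  by (cases t) auto

lemma itc_pos: "1 \<le> itc (Some a)"
  by (cases a) auto

lemma pot_rel:
  assumes "good r0 t" "cell t = Some a"
  shows "AA r0 (rank t) (kids t) + sum_list (map (pot r0) (kids t)) = pot r0 t - gg r0 (rank t) a"
proof (cases t)
  case (Nd r c ks)
  show ?thesis
  proof (cases "r0 < r")
    case True
    then show ?thesis using assms Nd by (simp add: AA_def gg_def phi_def)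
  next
    case False
    have "\<forall>k\<in>set ks. rank k \<le> r0" using assms Nd False by (auto split: if_splits)
    then have "sum_list (map (pot r0) ks) = 0"
      by (induction ks) (auto simp: pot_low)
    then show ?thesis using assms Nd False by (simp add: AA_def gg_def)
  qed
qed

lemma arg_min_in:
  assumes "finite I" "I \<noteq> {}"
  shows "arg_min (f::_ \<Rightarrow> _::order) (\<lambda>i. i \<in> I) \<in> I"
  using arg_min_if_finite(1)[OF assms, of f] unfolding arg_min_on_def .

lemma sum_list_map_update:
  "i < length xs \<Longrightarrow> sum_list (map f (xs[i := x])) = sum_list (map f xs) - f (xs!i) + (f x :: real)"
proof (induction xs arbitrary: i)
  case Nil then show ?case by simp
next
  case (Cons y ys)
  show ?case
  proof (cases i)
    case 0 then show ?thesis by simp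
  next
    case (Suc j)
    then have "j < length ys" using Cons.prems by simp
    then show ?thesis using Cons.IH[of j] Suc by simp
  qed
qed

lemma pull_lem:
  fixes cs :: "('k::linorder,'v) tree list"
  assumes IH: "\<And>(ks::('k,'v) tree list) t' k. fill r0 (Nd (s-1) None ks) = (t',k) \<Longrightarrow> good r0 (Nd (s-1) None ks) \<Longrightarrow>
      good r0 t' \<and> rank t' = s-1 \<and> real k + pot r0 t' \<le> AA r0 (s-1) ks + sum_list (map (pot r0) ks)"
  and s: "0 < s" and cs: "\<forall>k\<in>set cs. rank k = s-1 \<and> good r0 k"
  and p: "pull (fillf s r0) cs = (x, cs', c)"
  shows "(x = None \<longrightarrow> cs' = cs \<and> c = 1 \<and> (\<forall>k\<in>set cs. cell k = None)) \<and>
   (\<forall>a. x = Some a \<longrightarrow> (\<exists>i<length cs. cell (cs!i) = Some a) \<and> length cs' = length cs \<and>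
       (\<forall>k\<in>set cs'. rank k = s-1 \<and> good r0 k) \<and> itc (Some a) \<le> 2^(s-1-r0) \<and>
       real c + sum_list (map (pot r0) cs') \<le> sum_list (map (pot r0) cs) + 1 - gg r0 (s-1) a)"
proof (cases "{i. i < length cs \<and> cell (cs!i) \<noteq> None} = {}")
  case True
  then have "pull (fillf s r0) cs = (None, cs, 1)" unfolding pull_def Let_def by simp
  with p have "x = None" "cs' = cs" "c = 1" by auto
  moreover have "\<forall>k\<in>set cs. cell k = None"
  proof
    fix k assume "k \<in> set cs"
    then obtain j where "j < length cs" "k = cs!j" by (auto simp: in_set_conv_nth)
    then show "cell k = None" using True by blast
  qed
  ultimately show ?thesis by simp
next
  case False
  define I where "I = {i. i < length cs \<and> cell (cs!i) \<noteq> None}"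
  define i where "i = arg_min (\<lambda>i. ckey (the (cell (cs!i)))) (\<lambda>i. i \<in> I)"
  have fin: "finite I" unfolding I_def by simp
  have iI: "i \<in> I" unfolding i_def using arg_min_in[OF fin] False I_def by auto
  then have il: "i < length cs" and ic: "cell (cs!i) \<noteq> None" unfolding I_def by auto
  define ch where "ch = cs!i"
  obtain a where a: "cell ch = Some a" using ic ch_def by auto
  have chg: "rank ch = s-1" "good r0 ch" using cs il ch_def by auto
  obtain ch' k where f: "fillf s r0 (Nd (rank ch) None (kids ch)) = (ch', k)" by fastforce
  have pe: "pull (fillf s r0) cs = (cell ch, cs[i:=ch'], 1+k)"
  proof -
    have IN: "I \<noteq> {}" using False I_def by simp
    show ?thesis
      unfolding pull_def Let_def I_def[symmetric] i_def[symmetric] ch_def[symmetric]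
      using IN f by simp
  qed
  with p a have xs: "x = Some a" "cs' = cs[i:=ch']" "c = 1 + k" by auto
  have f2: "fill r0 (Nd (s-1) None (kids ch)) = (ch', k)"
    using f chg s by (simp add: fill_def)
  have ih: "good r0 ch' \<and> rank ch' = s-1 \<and> real k + pot r0 ch' \<le> AA r0 (s-1) (kids ch) + sum_list (map (pot r0) (kids ch))"
    using IH[OF f2] good_empty[OF chg(2)] chg(1) by simp
  have rel: "AA r0 (s-1) (kids ch) + sum_list (map (pot r0) (kids ch)) = pot r0 ch - gg r0 (s-1) a"
    using pot_rel[OF chg(2) a] chg(1) by simp
  have itc: "itc (Some a) \<le> 2^(s-1-r0)" using chg a by (cases ch) auto
  have sm: "sum_list (map (pot r0) cs') = sum_list (map (pot r0) cs) - pot r0 ch + pot r0 ch'"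
    using sum_list_map_update[OF il] xs ch_def by simp
  have "\<forall>k\<in>set cs'. rank k = s-1 \<and> good r0 k"
    using cs ih xs(2) by (auto dest!: set_update_subset_insert[THEN subsetD])
  then show ?thesis using xs ih rel sm itc il a ch_def by auto
qed

lemma itc_corrupt: "itc (corrupt (Some a) (Some b)) = itc (Some a) + itc (Some b)"
  by (cases a; cases b) auto

lemma kap_itc: "kap r0 \<le> kap r0 * real (itc (Some a))"
proof -
  have k: "0 \<le> kap r0" by (simp add: kap_def)
  have "(1::real) \<le> real (itc (Some a))" using itc_pos[of a] by linarith
  from mult_left_mono[OF this k] show ?thesis by simp
qed

lemma nonemp_nth: "i < length cs \<Longrightarrow> cell (cs!i) = Some a \<Longrightarrow> nonemp cs"
proof -
  assume "i < length cs" "cell (cs!i) = Some a"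
  moreover then have "cs!i \<in> set cs" by simp
  ultimately show ?thesis unfolding nonemp_def by (intro bexI[of _ "cs!i"]) simp_all
qed

lemma fill_main:
  fixes ks :: "('k::linorder,'v) tree list"
  assumes "2 \<le> r0"
  shows "fill r0 (Nd s None ks) = (t', k) \<Longrightarrow> good r0 (Nd s None ks) \<Longrightarrow>
     good r0 t' \<and> rank t' = s \<and> real k + pot r0 t' \<le> AA r0 s ks + sum_list (map (pot r0) ks)"
proof (induction s arbitrary: ks t' k)
  case 0
  then have "ks = []" by simp
  then have "fill r0 (Nd 0 None ks) = (Nd 0 None [], 2)" by (simp add: fill_def fill_step_def pull_def)
  with 0 have "t' = Nd 0 None []" "k = 2" by auto
  then show ?case using \<open>ks = []\<close> by (simp add: AA_def)
next
  case (Suc s)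
  let ?S = "Suc s"
  have IH: "\<And>(ks::('k,'v) tree list) t' k. fill r0 (Nd (?S-1) None ks) = (t',k) \<Longrightarrow> good r0 (Nd (?S-1) None ks) \<Longrightarrow>
      good r0 t' \<and> rank t' = ?S-1 \<and> real k + pot r0 t' \<le> AA r0 (?S-1) ks + sum_list (map (pot r0) ks)"
    using Suc.IH by simp
  have ks: "\<forall>k\<in>set ks. rank k = ?S-1 \<and> good r0 k" "length ks = 3" using Suc.prems(2) by auto
  have fe: "fill r0 (Nd ?S None ks) = fill_step r0 (fillf ?S r0) (Nd ?S None ks)"
    by (simp add: fill_def)
  obtain x1 cs1 k1 where p1: "pull (fillf ?S r0) ks = (x1, cs1, k1)" by (cases "pull (fillf ?S r0) ks") auto
  have L1: "(x1 = None \<longrightarrow> cs1 = ks \<and> k1 = 1 \<and> (\<forall>k\<in>set ks. cell k = None)) \<and>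
   (\<forall>a. x1 = Some a \<longrightarrow> (\<exists>i<length ks. cell (ks!i) = Some a) \<and> length cs1 = length ks \<and>
       (\<forall>k\<in>set cs1. rank k = s \<and> good r0 k) \<and> itc (Some a) \<le> 2^(s-r0) \<and>
       real k1 + sum_list (map (pot r0) cs1) \<le> sum_list (map (pot r0) ks) + 1 - gg r0 s a)"
    using pull_lem[OF IH zero_less_Suc ks(1) p1] by simp
  show ?case
  proof (cases "?S \<le> r0")
    case True
    have fs: "fill r0 (Nd ?S None ks) = (Nd ?S x1 cs1, 1 + k1)"
      using fe p1 True by (simp add: fill_step_def)
    with Suc.prems have t': "t' = Nd ?S x1 cs1" "k = 1 + k1" by auto
    have sum0: "\<And>cs::('k,'v) tree list. \<forall>k\<in>set cs. rank k = s \<and> good r0 k \<Longrightarrow> sum_list (map (pot r0) cs) = 0"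
    proof -
      fix cs :: "('k,'v) tree list" assume "\<forall>k\<in>set cs. rank k = s \<and> good r0 k"
      then show "sum_list (map (pot r0) cs) = 0" using True
        by (induction cs) (auto simp: pot_low)
    qed
    show ?thesis
    proof (cases x1)
      case None
      then show ?thesis using L1 t' ks True sum0[of ks] by (auto simp: AA_def)
    next
      case (Some a)
      have A: "length cs1 = length ks" "\<forall>k\<in>set cs1. rank k = s \<and> good r0 k"
        "itc (Some a) \<le> 2^(s-r0)"
        "real k1 + sum_list (map (pot r0) cs1) \<le> sum_list (map (pot r0) ks) + 1 - gg r0 s a"
        using L1 Some by blast+
      have "2^(s - r0) = (1::nat)" "2^(?S - r0) = (1::nat)" using True by auto
      then have g: "good r0 t'" using A t' ks Some by auto
      have "real k \<le> 2 * real ?S + 2" using A t' True sum0[OF ks(1)[simplified]] sum0[of cs1, OF A(2)]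
        by (simp add: gg_def)
      then show ?thesis using g t' True by (simp add: AA_def sum0[OF ks(1)[simplified]])
    qed
  next
    case False
    obtain x2 cs2 k2 where p2: "pull (fillf ?S r0) cs1 = (x2, cs2, k2)" by (cases "pull (fillf ?S r0) cs1") auto
    have fs: "fill r0 (Nd ?S None ks) = (Nd ?S (corrupt x1 x2) cs2, 1 + k1 + k2)"
      using fe p1 p2 False by (simp add: fill_step_def)
    with Suc.prems have t': "t' = Nd ?S (corrupt x1 x2) cs2" "k = 1 + k1 + k2" by auto
    have cs1: "\<forall>k\<in>set cs1. rank k = ?S-1 \<and> good r0 k"
    proof (cases x1)
      case None then show ?thesis using L1 ks by simp
    next
      case (Some a) then show ?thesis using L1 by simp
    qed
    have L2: "(x2 = None \<longrightarrow> cs2 = cs1 \<and> k2 = 1 \<and> (\<forall>k\<in>set cs1. cell k = None)) \<and>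
     (\<forall>a. x2 = Some a \<longrightarrow> (\<exists>i<length cs1. cell (cs1!i) = Some a) \<and> length cs2 = length cs1 \<and>
       (\<forall>k\<in>set cs2. rank k = s \<and> good r0 k) \<and> itc (Some a) \<le> 2^(s-r0) \<and>
       real k2 + sum_list (map (pot r0) cs2) \<le> sum_list (map (pot r0) cs1) + 1 - gg r0 s a)"
      using pull_lem[OF IH zero_less_Suc cs1 p2] by simp
    have kp: "kap r0 = 4 * real r0 + 5" by (simp add: kap_def)
    show ?thesis
    proof (cases x1)
      case None
      have n1: "cs1 = ks" "k1 = 1" "\<forall>k\<in>set ks. cell k = None" using L1 None by simp_all
      have x2: "x2 = None"
      proof (rule ccontr)
        assume "x2 \<noteq> None"
        then obtain b where "x2 = Some b" by auto
        then obtain i where "i < length cs1" "cell (cs1!i) = Some b" using L2 by blast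
        then show False using n1 nth_mem by fastforce
      qed
      have n2: "cs2 = cs1" "k2 = 1" using L2 x2 by simp_all
      have ne: "\<not> nonemp ks" using n1 by (simp add: nonemp_def)
      have tt: "t' = Nd ?S None ks" "k = 3" using t' None x2 n1 n2 by simp_all
      have "good r0 t'" using tt ks by simp
      moreover have "pot r0 t' = kap r0 * 2^(?S - r0) + sum_list (map (pot r0) ks)"
        using tt ne False by (simp add: phi_def)
      moreover have "AA r0 ?S ks = kap r0 * 2^(?S - r0) + 3" using ne False by (simp add: AA_def)
      ultimately show ?thesis using tt by simp
    next
      case (Some a)
      have A0: "\<exists>i<length ks. cell (ks!i) = Some a" "itc (Some a) \<le> 2^(s-r0)"
        using L1 Some by blast+
      obtain i where i: "i < length ks" "cell (ks!i) = Some a" using A0 by blast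
      have ne: "nonemp ks" by (rule nonemp_nth[OF i])
      have ia: "itc (Some a) \<le> 2^(s-r0)" using A0 by simp
      have ka: "kap r0 \<le> kap r0 * real (itc (Some a))" by (rule kap_itc)
      have c1: "real k1 + sum_list (map (pot r0) cs1) \<le> sum_list (map (pot r0) ks) + 1 - gg r0 s a"
        using L1 Some by blast
      show ?thesis
      proof (cases x2)
        case None
        have ce: "\<forall>k\<in>set cs1. cell k = None" "cs2 = cs1" "k2 = 1" using L2 None by simp_all
        then have "\<not> nonemp cs2" by (simp add: nonemp_def)
        moreover have "good r0 t'"
        proof -
          have "(2::nat)^(s-r0) \<le> 2^(Suc s - r0)" by (rule power_increasing) auto
          then have "itc (Some a) \<le> 2^(Suc s - r0)" using ia by linarith
          moreover have "length cs1 = length ks" using L1 \<open>x1 = Some a\<close> by blast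
          ultimately show ?thesis using t' ce cs1 ks \<open>x1 = Some a\<close> \<open>x2 = None\<close> by simp
        qed
        moreover have "real k + pot r0 t' \<le> AA r0 ?S ks + sum_list (map (pot r0) ks)"
        proof -
          have ne2: "\<not> nonemp cs1" using ce by (simp add: nonemp_def)
          have pe: "pot r0 t' = kap r0 * 2^(?S - r0) - kap r0 * real (itc (Some a)) + (2*real ?S + 5)
               + sum_list (map (pot r0) cs1)"
            using t' False ce ne2 \<open>x1 = Some a\<close> \<open>x2 = None\<close> by (simp add: phi_def)
          have AAe: "AA r0 ?S ks = kap r0 * 2^(?S - r0) + 8" using ne False by (simp add: AA_def)
          have kk: "real k = 2 + real k1" using t' ce by simp
          show ?thesis
          proof (cases "r0 < s")
            case True
            then show ?thesis using pe AAe kk c1 by (simp add: gg_def)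
          next
            case False2: False
            then have "gg r0 s a = - (2 * real s + 2)" by (simp add: gg_def)
            moreover have "real s = real r0" using False False2 by simp
            moreover have "real (Suc s) = real s + 1" by simp
            ultimately show ?thesis using pe AAe kk c1 ka kp by (smt (verit))
          qed
        qed
        ultimately show ?thesis using t' by simp
      next
        case (Some b)
        have B: "length cs2 = length cs1" "\<forall>k\<in>set cs2. rank k = s \<and> good r0 k"
          "itc (Some b) \<le> 2^(s-r0)"
          "real k2 + sum_list (map (pot r0) cs2) \<le> sum_list (map (pot r0) cs1) + 1 - gg r0 s b"
          using L2 Some by blast+
        have A: "length cs1 = length ks"
          using L1 \<open>x1 = Some a\<close> by blast
        have ib: "itc (Some b) \<le> 2^(s-r0)" using B by simp
        have kb: "kap r0 \<le> kap r0 * real (itc (Some b))" by (rule kap_itc)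
        have c2: "real k2 + sum_list (map (pot r0) cs2) \<le> sum_list (map (pot r0) cs1) + 1 - gg r0 s b"
          using B by simp
        have itcc: "itc (corrupt x1 x2) = itc (Some a) + itc (Some b)"
          using \<open>x1 = Some a\<close> Some itc_corrupt by simp
        have cn: "corrupt x1 x2 \<noteq> None"
          using \<open>x1 = Some a\<close> Some by (cases a; cases b) auto
        have pw: "(2::nat)^(?S - r0) = 2 * 2^(s - r0)" using False by (simp add: Suc_diff_le)
        have "itc (corrupt x1 x2) \<le> 2^(?S - r0)" using itcc ia ib pw by simp
        then have g1: "good r0 t'" using t' B A ks by simp
        have "real k + pot r0 t' \<le> AA r0 ?S ks + sum_list (map (pot r0) ks)"
        proof -
          have e1: "pot r0 t' = phi r0 ?S (corrupt x1 x2) cs2 + sum_list (map (pot r0) cs2)"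
            using t' False by simp
          have e2: "phi r0 ?S (corrupt x1 x2) cs2 \<le> kap r0 * 2^(?S-r0) - kap r0 * real (itc (Some a))
              - kap r0 * real (itc (Some b)) + 2 * real ?S + 10"
            using cn unfolding phi_def itcc of_nat_add distrib_left by simp
          have e3: "AA r0 ?S ks = kap r0 * 2^(?S-r0) + 8" using ne False by (simp add: AA_def)
          show ?thesis
          proof (cases "r0 < s")
            case True
            then show ?thesis using e1 e2 e3 c1 c2 t'(2) True assms
              by (simp add: gg_def)
          next
            case False2: False
            then have gs: "gg r0 s a = - (2 * real s + 2)" "gg r0 s b = - (2 * real s + 2)"
              by (simp_all add: gg_def)
            have "real s = real r0" using False False2 by simp
            moreover have "real (Suc s) = real s + 1" by simp
            moreover have "real k = 1 + real k1 + real k2" using t'(2) by simp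
            moreover have "(2::real) \<le> real r0" using assms by simp
            ultimately show ?thesis using e1 e2 e3 c1 c2 gs ka kb kp by (smt (verit))
          qed
        qed
        then show ?thesis using g1 t' by simp
      qed
    qed
  qed
qed




lemma pot_nonneg: "good r0 t \<Longrightarrow> 0 \<le> pot r0 t"
proof (induction t)
  case (Nd r c ks)
  have ks: "\<forall>k\<in>set ks. good r0 k" using Nd.prems by (auto split: if_splits)
  have s: "0 \<le> sum_list (map (pot r0) ks)"
    using Nd.IH ks by (intro sum_list_nonneg) auto
  have "real (itc c) \<le> 2^(r-r0)" using Nd.prems by (simp add: of_nat_le_iff[symmetric])
  then have "kap r0 * real (itc c) \<le> kap r0 * 2^(r-r0)"
    by (intro mult_left_mono) (auto simp: kap_def)
  then have "0 \<le> phi r0 r c ks" unfolding phi_def by auto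
  then show ?case using s by simp
qed

definition rho :: "nat \<Rightarrow> nat \<Rightarrow> real" where
  "rho r0 r = 3 * real r + 6 + kap r0 * 2^(Suc r) / 2^r0"

definition Phi :: "nat \<Rightarrow> ('k,'v) tree list \<Rightarrow> real" where
  "Phi r0 ts = sum_list (map (\<lambda>t. rho r0 (rank t) + pot r0 t) ts)"

definition hinv :: "nat \<Rightarrow> ('k,'v) tree list \<Rightarrow> bool" where
  "hinv r0 ts = ((\<forall>t\<in>set ts. good r0 t) \<and> sorted (map rank ts) \<and>
     (\<forall>i. i + 2 < length ts \<longrightarrow> rank (ts!i) < rank (ts!(i+2))))"

lemma rho_nonneg: "0 \<le> rho r0 r"
  by (simp add: rho_def kap_def)

lemma Phi_nonneg: "\<forall>t\<in>set ts. good r0 t \<Longrightarrow> 0 \<le> Phi r0 ts"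
  unfolding Phi_def by (intro sum_list_nonneg) (auto intro!: add_nonneg_nonneg rho_nonneg pot_nonneg)

lemma Phi_Cons[simp]: "Phi r0 (t # ts) = rho r0 (rank t) + pot r0 t + Phi r0 ts"
  by (simp add: Phi_def)

lemma rho_link: "1 + AA r0 (Suc r) ks + rho r0 (Suc r) \<le> 3 * rho r0 r"
proof -
  have k0: "0 \<le> kap r0 * 2^(Suc r) / 2^r0" by (simp add: kap_def)
  have e: "rho r0 (Suc r) = 3 * real r + 9 + 2 * (kap r0 * 2^(Suc r) / 2^r0)"
    by (simp add: rho_def)
  show ?thesis
  proof (cases "Suc r \<le> r0")
    case True
    then have "AA r0 (Suc r) ks = 2 * real r + 4" by (simp add: AA_def)
    then show ?thesis using e k0 by (simp add: rho_def)
  next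
    case False
    have "(2::real)^(Suc r - r0) = 2^(Suc r) / 2^r0"
      using False by (simp add: power_diff)
    then have "AA r0 (Suc r) ks \<le> kap r0 * 2^(Suc r) / 2^r0 + 8"
      using False by (simp add: AA_def)
    then show ?thesis using e k0 by (simp add: rho_def)
  qed
qed

lemma rank_ge: "hinv r0 ts \<Longrightarrow> i < length ts \<Longrightarrow> i \<le> 2 * rank (ts!i) + 1"
proof (induction i rule: less_induct)
  case (less i)
  show ?case
  proof (cases "i < 2")
    case True then show ?thesis by simp
  next
    case False
    then have "i - 2 + 2 < length ts" using less.prems by simp
    then have "rank (ts!(i-2)) < rank (ts!(i-2+2))" using less.prems(1) unfolding hinv_def by blast
    moreover have "i - 2 \<le> 2 * rank (ts!(i-2)) + 1" using less.IH[of "i-2"] less.prems False by simp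
    moreover have "i - 2 + 2 = i" using False by simp
    ultimately show ?thesis by simp
  qed
qed


lemma hinv_tl: "hinv r0 (t # ts) \<Longrightarrow> hinv r0 ts"
  unfolding hinv_def
proof (intro conjI allI impI)
  assume h: "(\<forall>t\<in>set (t # ts). good r0 t) \<and> sorted (map rank (t # ts)) \<and>
    (\<forall>i. i + 2 < length (t # ts) \<longrightarrow> rank ((t # ts) ! i) < rank ((t # ts) ! (i + 2)))"
  then show "\<forall>t\<in>set ts. good r0 t" "sorted (map rank ts)" by auto
  fix i assume "i + 2 < length ts"
  then have "Suc i + 2 < length (t # ts)" by simp
  then have "rank ((t # ts) ! Suc i) < rank ((t # ts) ! (Suc i + 2))" using h by blast
  then show "rank (ts ! i) < rank (ts ! (i + 2))" by simp
qed

lemma hinv_cons: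
  assumes g: "\<forall>t\<in>set (v#ts). good r0 t" and so: "sorted (map rank (v#ts))" and h: "hinv r0 ts"
    and n3: "\<not> (2 \<le> length ts \<and> rank v = rank (ts!0) \<and> rank (ts!0) = rank (ts!1))"
  shows "hinv r0 (v#ts)"
  unfolding hinv_def
proof (intro conjI allI impI)
  show "\<forall>t\<in>set (v#ts). good r0 t" using g .
  show "sorted (map rank (v#ts))" using so .
  fix i assume i: "i + 2 < length (v # ts)"
  show "rank ((v # ts) ! i) < rank ((v # ts) ! (i + 2))"
  proof (cases i)
    case 0
    have l: "2 \<le> length ts" using i 0 by simp
    have l0: "0 < length ts" using l by linarith
    have m: "ts!0 \<in> set ts" using nth_mem[OF l0] .
    have s1: "rank v \<le> rank (ts!0)" using so m by simp
    have st: "sorted (map rank ts)" using h unfolding hinv_def by simp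
    have l1: "1 < length ts" using l by linarith
    have "(map rank ts)!0 \<le> (map rank ts)!1" by (rule sorted_nth_mono[OF st]) (use l1 in simp_all)
    then have s2: "rank (ts!0) \<le> rank (ts!1)" using l0 l1 by simp
    have "rank v < rank (ts!1)" using s1 s2 n3 l by linarith
    then show ?thesis using 0 by simp
  next
    case (Suc j)
    then have "j + 2 < length ts" using i by simp
    then have "rank (ts!j) < rank (ts!(j+2))" using h unfolding hinv_def by blast
    then show ?thesis using Suc by simp
  qed
qed

lemma good_link: "\<forall>t\<in>set [t1,t2,t3]. good r0 t \<and> rank t = r \<Longrightarrow> good r0 (Nd (Suc r) None [t1,t2,t3])"
  by auto

lemma link_lem:
  fixes ts :: "('k::linorder,'v) tree list"
  shows "2 \<le> r0 \<Longrightarrow> link_loop r0 ts = (ts', k) \<Longrightarrow> ts \<noteq> [] \<Longrightarrow> \<forall>t\<in>set ts. good r0 t \<Longrightarrow>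
     sorted (map rank ts) \<Longrightarrow> hinv r0 (tl ts) \<Longrightarrow> hinv r0 ts' \<and> real k + Phi r0 ts' \<le> Phi r0 ts + 1"
proof (induction r0 ts arbitrary: ts' k rule: link_loop.induct)
  case (1 r0 t1 t2 t3 ts)
  show ?case
  proof (cases "rank t1 = rank t2 \<and> rank t2 = rank t3")
    case True
    obtain v kf where f: "fill r0 (Nd (Suc (rank t1)) None [t1,t2,t3]) = (v, kf)"
      by (cases "fill r0 (Nd (Suc (rank t1)) None [t1,t2,t3])") auto
    obtain ts2 k2 where l: "link_loop r0 (v # ts) = (ts2, k2)" by (cases "link_loop r0 (v # ts)") auto
    have "link_loop r0 (t1#t2#t3#ts) = (ts2, 1 + kf + k2)" using True f l by simp
    with "1.prems" have e: "ts' = ts2" "k = 1 + kf + k2" by auto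
    have gl: "good r0 (Nd (Suc (rank t1)) None [t1,t2,t3])"
      using "1.prems"(4) True by (intro good_link) auto
    have fm: "good r0 v \<and> rank v = Suc (rank t1) \<and>
       real kf + pot r0 v \<le> AA r0 (Suc (rank t1)) [t1,t2,t3] + sum_list (map (pot r0) [t1,t2,t3])"
      using fill_main[OF "1.prems"(1) f gl] .
    have h23: "hinv r0 (t2 # t3 # ts)" using "1.prems"(6) by simp
    have hts: "hinv r0 ts" using hinv_tl[OF hinv_tl[OF h23]] .
    have big: "\<forall>t\<in>set ts. Suc (rank t1) \<le> rank t"
    proof
      fix t assume tin: "t \<in> set ts"
      then have ne: "ts \<noteq> []" by auto
      then have "0 + 2 < length (t2 # t3 # ts)" by simp
      then have "rank t2 < rank (ts!0)" using h23 unfolding hinv_def by fastforce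
      moreover have "rank (ts!0) \<le> rank t"
      proof -
        obtain j where j: "j < length ts" "t = ts!j" using tin by (auto simp: in_set_conv_nth)
        have "sorted (map rank ts)" using hts unfolding hinv_def by simp
        then have "(map rank ts)!0 \<le> (map rank ts)!j" by (rule sorted_nth_mono) (use j in simp_all)
        moreover have "0 < length ts" using j(1) by linarith
        ultimately show ?thesis using j by simp
      qed
      ultimately show "Suc (rank t1) \<le> rank t" using True by simp
    qed
    have so: "sorted (map rank (v # ts))"
      using big fm hts unfolding hinv_def by auto
    have gv: "\<forall>t\<in>set (v # ts). good r0 t" using fm "1.prems"(4) by auto
    have ih: "hinv r0 ts2 \<and> real k2 + Phi r0 ts2 \<le> Phi r0 (v # ts) + 1"
      using "1.IH"[OF True f[symmetric] refl "1.prems"(1) l _ gv so] hts by simp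
    have rl: "1 + AA r0 (Suc (rank t1)) [t1,t2,t3] + rho r0 (Suc (rank t1)) \<le> 3 * rho r0 (rank t1)"
      by (rule rho_link)
    show ?thesis using e ih fm rl True by simp
  next
    case False
    then have "link_loop r0 (t1#t2#t3#ts) = (t1#t2#t3#ts, 1)"
      by (simp only: link_loop.simps if_not_P[OF False] if_False)
    with "1.prems" have e: "ts' = t1#t2#t3#ts" "k = 1" by auto
    have "hinv r0 (t1#t2#t3#ts)"
    proof (rule hinv_cons)
      show "\<forall>t\<in>set (t1#t2#t3#ts). good r0 t" using "1.prems"(4) .
      show "sorted (map rank (t1#t2#t3#ts))" using "1.prems"(5) .
      show "hinv r0 (t2#t3#ts)" using "1.prems"(6) by simp
      show "\<not> (2 \<le> length (t2#t3#ts) \<and> rank t1 = rank ((t2#t3#ts)!0) \<and> rank ((t2#t3#ts)!0) = rank ((t2#t3#ts)!1))"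
        using False by simp
    qed
    then show ?thesis using e by simp
  qed
next
  case ("2_1" r0) then show ?case by simp
next
  case ("2_2" r0 v)
  then have e: "ts' = [v]" "k = 1" by auto
  have "hinv r0 [v]" using "2_2.prems"(4) by (simp add: hinv_def)
  then show ?case using e by simp
next
  case ("2_3" r0 v vb)
  then have e: "ts' = [v, vb]" "k = 1" by auto
  have "hinv r0 [v, vb]" using "2_3.prems"(4,5) by (simp add: hinv_def)
  then show ?case using e by simp
qed



lemma hinv_update:
  assumes "hinv r0 ts" "j < length ts" "good r0 t" "rank t = rank (ts!j)"
  shows "hinv r0 (ts[j := t])"
proof -
  have m: "map rank (ts[j := t]) = map rank ts"
    using assms(2,4) list_update_id[of "map rank ts" j] by (simp add: map_update)
  have r: "rank (ts[j:=t] ! i) = rank (ts ! i)" if "i < length ts" for i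
    using assms(2,4) that by (cases "i = j") auto
  have g: "\<forall>x\<in>set (ts[j:=t]). good r0 x"
    using assms(1,3) unfolding hinv_def by (auto dest!: set_update_subset_insert[THEN subsetD])
  show ?thesis
    unfolding hinv_def
  proof (intro conjI allI impI)
    show "\<forall>x\<in>set (ts[j:=t]). good r0 x" using g .
    show "sorted (map rank (ts[j := t]))" using m assms(1) unfolding hinv_def by simp
    fix i assume i: "i + 2 < length (ts[j:=t])"
    then have "rank (ts!i) < rank (ts!(i+2))" using assms(1) unfolding hinv_def by simp
    moreover have "i < length ts" "i + 2 < length ts" using i by auto
    ultimately show "rank (ts[j:=t] ! i) < rank (ts[j:=t] ! (i+2))" using r by simp
  qed
qed

lemma Phi_update:
  "j < length ts \<Longrightarrow> Phi r0 (ts[j := t]) = Phi r0 ts - (rho r0 (rank (ts!j)) + pot r0 (ts!j)) + (rho r0 (rank t) + pot r0 t)"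
  unfolding Phi_def by (rule sum_list_map_update)

lemma min_root_in: "root_idx ts \<noteq> {} \<Longrightarrow> min_root ts \<in> root_idx ts"
  unfolding min_root_def
  by (rule arg_min_in) (auto simp: root_idx_def)

lemma ext_lem:
  fixes ts :: "('k::linorder,'v) tree list"
  shows "ext_step r0 ts ts' k \<Longrightarrow> hinv r0 ts \<Longrightarrow> 2 \<le> r0 \<Longrightarrow>
    hinv r0 ts' \<and> real k + Phi r0 ts' \<le> Phi r0 ts + 4 * real r0 + 6"
proof (induction rule: ext_step.induct)
  case (ext_empty ts)
  then show ?case by simp
next
  case (ext_corr ts j e C x)
  have jl: "j < length ts" using min_root_in[OF ext_corr.hyps(1)] ext_corr.hyps(2) by (simp add: root_idx_def)
  obtain s c ks where t: "ts!j = Nd s c ks" by (cases "ts!j") auto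
  have c: "c = Some (e, C)" using t ext_corr.hyps(3) by simp
  have gt: "good r0 (ts!j)" using ext_corr.prems(1) jl unfolding hinv_def by simp
  have Cne: "C \<noteq> []" using ext_corr.hyps(4) by auto
  have it: "Suc (length C) \<le> 2^(s - r0)" using gt t c by simp
  have hi: "r0 < s"
  proof (rule ccontr)
    assume "\<not> r0 < s"
    then have "2^(s - r0) = (1::nat)" by simp
    then show False using it Cne by simp
  qed
  define t' where "t' = Nd s (Some (e, remove1 x C)) ks"
  have lr: "length (remove1 x C) = length C - 1" using ext_corr.hyps(4) by (simp add: length_remove1)
  have e: "ts[j := Nd (rank (ts ! j)) (Some (e, remove1 x C)) (kids (ts ! j))] = ts[j := t']"
    using t t'_def by simp
  have gt': "good r0 t'" using gt t c lr it unfolding t'_def by auto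
  have rt: "rank t' = rank (ts!j)" using t t'_def by simp
  have pe: "pot r0 t' = pot r0 (ts!j) + kap r0"
  proof -
    have "real (length (remove1 x C)) = real (length C) - 1" using lr Cne by (cases C) auto
    then show ?thesis using t c hi unfolding t'_def by (simp add: phi_def algebra_simps)
  qed
  have "hinv r0 (ts[j := t'])" using hinv_update[OF ext_corr.prems(1) jl gt' rt] .
  moreover have "Phi r0 (ts[j := t']) = Phi r0 ts + kap r0"
    using Phi_update[OF jl, of r0 t'] rt pe by simp
  ultimately show ?case using e by (simp add: kap_def)
next
  case (ext_own ts j e t' k)
  have jl: "j < length ts" using min_root_in[OF ext_own.hyps(1)] ext_own.hyps(2) by (simp add: root_idx_def)
  have gt: "good r0 (ts!j)" using ext_own.prems(1) jl unfolding hinv_def by simp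
  have fm: "good r0 t' \<and> rank t' = rank (ts!j) \<and>
     real k + pot r0 t' \<le> AA r0 (rank (ts!j)) (kids (ts!j)) + sum_list (map (pot r0) (kids (ts!j)))"
    using fill_main[OF ext_own.prems(2) ext_own.hyps(4)] good_empty[OF gt] by simp
  have rel: "AA r0 (rank (ts!j)) (kids (ts!j)) + sum_list (map (pot r0) (kids (ts!j))) = pot r0 (ts!j) - gg r0 (rank (ts!j)) (e, [])"
    using pot_rel[OF gt ext_own.hyps(3)] .
  have jb: "j \<le> 2 * rank (ts!j) + 1" using rank_ge[OF ext_own.prems(1) jl] .
  have gb: "2 + real j - gg r0 (rank (ts!j)) (e, []) \<le> 4 * real r0 + 6"
  proof (cases "r0 < rank (ts!j)")
    case True
    then show ?thesis using jb by (simp add: gg_def kap_def)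
  next
    case False
    then show ?thesis using jb by (simp add: gg_def)
  qed
  have "hinv r0 (ts[j := t'])" using hinv_update[OF ext_own.prems(1) jl] fm by simp
  moreover have "Phi r0 (ts[j := t']) = Phi r0 ts - pot r0 (ts!j) + pot r0 t'"
    using Phi_update[OF jl, of r0 t'] fm by simp
  ultimately show ?case using fm rel gb by simp
qed

lemma pow_bound: "2 \<le> n \<Longrightarrow> 8 * n + 10 \<le> 7 * 2^n"
proof (induction n rule: nat_induct_at_least)
  case base then show ?case by simp
next
  case (Suc n)
  have "(28::nat) \<le> 7 * 2^n"
  proof -
    have "(4::nat) \<le> 2^n" using Suc.hyps power_increasing[of 2 n "2::nat"] by simp
    then show ?thesis by simp
  qed
  then show ?case using Suc.IH by simp
qed

lemma rho0: "2 \<le> r0 \<Longrightarrow> rho r0 0 \<le> 13"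
proof -
  assume r: "2 \<le> r0"
  have "real (8 * r0 + 10) \<le> real (7 * 2^r0)" using pow_bound[OF r] by linarith
  then have a: "8 * real r0 + 10 \<le> 7 * 2^r0" by simp
  have p: "(0::real) < 2^r0" by simp
  have "kap r0 * 2 / 2^r0 \<le> 7" using a p by (simp add: kap_def divide_le_eq)
  then show ?thesis by (simp add: rho_def)
qed

lemma ins_lem:
  fixes ts :: "('k::linorder,'v) tree list"
  assumes "ins r0 e ts = (ts', k)" "hinv r0 ts" "2 \<le> r0"
  shows "hinv r0 ts' \<and> real k + Phi r0 ts' \<le> Phi r0 ts + 16"
proof -
  obtain ts2 k2 where l: "link_loop r0 (Nd 0 (Some (e, [])) [] # ts) = (ts2, k2)"
    by (cases "link_loop r0 (Nd 0 (Some (e, [])) [] # ts)") auto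
  have e: "ts' = ts2" "k = k2 + 2" using assms(1) l by (auto simp: ins_def)
  have g: "\<forall>t\<in>set (Nd 0 (Some (e, [])) [] # ts). good r0 t" using assms(2) by (simp add: hinv_def)
  have so: "sorted (map rank (Nd 0 (Some (e, [])) [] # ts))" using assms(2) by (simp add: hinv_def)
  have L: "hinv r0 ts2 \<and> real k2 + Phi r0 ts2 \<le> Phi r0 (Nd 0 (Some (e, [])) [] # ts) + 1"
    using link_lem[OF assms(3) l _ g so] assms(2) by simp
  have "pot r0 (Nd 0 (Some (e, [])) []) = 0" by simp
  then show ?thesis using L e rho0[OF assms(3)] by simp
qed

lemma inserted_Cons[simp]:
  "inserted (Insert e # ops) = e # inserted ops" "inserted (ExtractMin # ops) = inserted ops"
  by (simp_all add: inserted_def)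

lemma n_ext_Cons[simp]:
  "n_ext (Insert e # ops) = n_ext ops" "n_ext (ExtractMin # ops) = Suc (n_ext ops)"
  by (simp_all add: n_ext_def)

lemma exec_lem:
  fixes ts :: "('k::linorder,'v) tree list"
  shows "exec r0 ts ops T \<Longrightarrow> hinv r0 ts \<Longrightarrow> 2 \<le> r0 \<Longrightarrow>
    real T \<le> Phi r0 ts + 16 * real (length (inserted ops)) + (4 * real r0 + 6) * real (n_ext ops)"
proof (induction rule: exec.induct)
  case (exec_nil ts)
  then show ?case using Phi_nonneg[of ts r0] by (simp add: hinv_def)
next
  case (exec_ins e ts ts' k ops c)
  have I: "hinv r0 ts' \<and> real k + Phi r0 ts' \<le> Phi r0 ts + 16" using ins_lem[OF exec_ins.hyps(1) exec_ins.prems] .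
  then have "real c \<le> Phi r0 ts' + 16 * real (length (inserted ops)) + (4 * real r0 + 6) * real (n_ext ops)"
    using exec_ins.IH exec_ins.prems(2) by simp
  then show ?case using I by (simp add: algebra_simps)
next
  case (exec_ext ts ts' k ops c)
  have I: "hinv r0 ts' \<and> real k + Phi r0 ts' \<le> Phi r0 ts + 4 * real r0 + 6"
    using ext_lem[OF exec_ext.hyps(1) exec_ext.prems] .
  then have "real c \<le> Phi r0 ts' + 16 * real (length (inserted ops)) + (4 * real r0 + 6) * real (n_ext ops)"
    using exec_ext.IH exec_ext.prems(2) by simp
  then show ?case using I by (simp add: algebra_simps)
qed

theorem mainTheorem12:
  "\<exists>c::real. \<forall>(\<epsilon>::real) (ops :: ('k::linorder,'v) hop list) T.
     0 < \<epsilon> \<and> \<epsilon> \<le> 1/2 \<and> distinct (map fst (inserted ops)) \<and> exec (thr \<epsilon>) [] ops T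
     \<longrightarrow> real T \<le> c * (real (length (inserted ops)) + real (n_ext ops) * log 2 (1 / \<epsilon>))"
proof (intro exI allI impI)
  fix \<epsilon> :: real and ops :: "('k::linorder,'v) hop list" and T
  assume a: "0 < \<epsilon> \<and> \<epsilon> \<le> 1/2 \<and> distinct (map fst (inserted ops)) \<and> exec (thr \<epsilon>) [] ops T"
  define L where "L = log 2 (1 / \<epsilon>)"
  define r0 where "r0 = thr \<epsilon>"
  have r2: "2 \<le> r0" unfolding r0_def thr_def by simp
  have h0: "hinv r0 ([] :: ('k,'v) tree list)" by (simp add: hinv_def)
  have T: "real T \<le> 16 * real (length (inserted ops)) + (4 * real r0 + 6) * real (n_ext ops)"
    using exec_lem[OF _ h0 r2] a r0_def by (simp add: Phi_def)
  have L1: "1 \<le> L"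
  proof -
    have "2 \<le> 1 / \<epsilon>" using a by (simp add: field_simps)
    then have "log 2 2 \<le> log 2 (1/\<epsilon>)" using a by (subst log_le_cancel_iff) auto
    then show ?thesis unfolding L_def by simp
  qed
  have rL: "real r0 \<le> 2 * L"
  proof -
    have c: "real (nat \<lceil>L\<rceil>) \<le> L + 1"
    proof -
      have "0 \<le> \<lceil>L\<rceil>" using L1 by simp
      then have "real (nat \<lceil>L\<rceil>) = real_of_int \<lceil>L\<rceil>" by simp
      also have "\<dots> \<le> L + 1" by linarith
      finally show ?thesis .
    qed
    have "real r0 = max 2 (real (nat \<lceil>L\<rceil>))" unfolding r0_def thr_def L_def by simp
    then have "real r0 = 2 \<or> real r0 = real (nat \<lceil>L\<rceil>)" by linarith
    then show ?thesis using c L1 by linarith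
  qed
  have B: "(4 * real r0 + 6) * real (n_ext ops) \<le> (14 * L) * real (n_ext ops)"
    using rL L1 by (intro mult_right_mono) auto
  have nn: "0 \<le> real (n_ext ops) * L" using L1 by simp
  have C: "(14 * L) * real (n_ext ops) \<le> 16 * (real (n_ext ops) * L)"
    using nn by (simp add: algebra_simps)
  have "real T \<le> 16 * real (length (inserted ops)) + 16 * (real (n_ext ops) * L)"
    using T B C by linarith
  then show "real T \<le> 16 * (real (length (inserted ops)) + real (n_ext ops) * log 2 (1 / \<epsilon>))"
    unfolding L_def[symmetric] by (simp add: algebra_simps)
qed


end
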